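(* Let $\boldsymbol{u}^\star\in\mathbb{R}^n\setminus\{\boldsymbol{0}\}$ and $f(\boldsymbol{u})=\frac12\|\boldsymbol{u}\boldsymbol{u}^{\mathrm T}-\boldsymbol{u}^\star{\boldsymbol{u}^\star}^{\mathrm T}\|_1$ on $\mathbb{R}^n$. Let $\boldsymbol{u}\ne\boldsymbol{0}$ be a spurious stationary point of $f$. Then $$\{\boldsymbol{w}\in\mathbb{R}^n:df(\boldsymbol{u})(\boldsymbol{w})=0\}=\prod_{j=1}^n C_j,\qquad C_j=\begin{cases}\operatorname{sgn}(u_j)\cdot\mathbb{R}_-, & j\in\operatorname{supp}(\boldsymbol{u}^\star),\ |u_j|=|u_j^\star|,\\ \mathbb{R}, & j\in\operatorname{supp}(\boldsymbol{u}^\star),\ |u_j|<|u_j^\star|,\\ \{0\}, & j\notin\operatorname{supp}(\boldsymbol{u}^\star).\end{cases}$$ Moreover, $\{\boldsymbol{w}:df(\boldsymbol{0})(\boldsymbol{w})=0\}=\mathbb{R}^n$.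
   Context: $\|\cdot\|_1$ is the entrywise $\ell_1$-norm. $\operatorname{supp}(\boldsymbol{x})=\{i:x_i\ne0\}$, $\mathbb{R}_-=\{x\le0\}$. $df(\boldsymbol{x})(\boldsymbol{w})=\lim_{t\searrow0}(f(\boldsymbol{x}+t\boldsymbol{w})-f(\boldsymbol{x}))/t$. A point $\boldsymbol{u}$ is stationary if $\boldsymbol{0}\in\partial f(\boldsymbol{u})$, where $\partial f(\boldsymbol{u})=\{\boldsymbol{Z}\boldsymbol{u}:\boldsymbol{Z}\text{ symmetric}, \boldsymbol{Z}\in\operatorname{Sign}(\boldsymbol{u}\boldsymbol{u}^{\mathrm T}-\boldsymbol{u}^\star{\boldsymbol{u}^\star}^{\mathrm T})\}$ (entrywise set-valued sign, $\operatorname{Sign}(0)=[-1,1]$) is the (Fréchet = limiting = Clarke) subdifferential; it is spurious if additionally $\boldsymbol{u}\notin\{\boldsymbol{u}^\star,-\boldsymbol{u}^\star\}$. *)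

theory Defs
  imports "HOL-Analysis.Analysis"
begin

definition obj :: "real^'n \<Rightarrow> real^'n \<Rightarrow> real" where
  "obj ustar u = (1/2) * (\<Sum>i\<in>UNIV. \<Sum>j\<in>UNIV. \<bar>u$i * u$j - ustar$i * ustar$j\<bar>)"

definition dirderiv :: "(real^'n \<Rightarrow> real) \<Rightarrow> real^'n \<Rightarrow> real^'n \<Rightarrow> real" where
  "dirderiv f x w = Lim (at_right 0) (\<lambda>t. (f (x + t *\<^sub>R w) - f x) / t)"

definition Sign :: "real \<Rightarrow> real set" where
  "Sign x = (if x = 0 then {-1..1} else {sgn x})"

definition subdiff :: "real^'n \<Rightarrow> real^'n \<Rightarrow> (real^'n) set" where
  "subdiff ustar u = {Z *v u | Z. transpose Z = Z \<and>
       (\<forall>i j. Z$i$j \<in> Sign (u$i * u$j - ustar$i * ustar$j))}"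

definition stationary :: "real^'n \<Rightarrow> real^'n \<Rightarrow> bool" where
  "stationary ustar u \<longleftrightarrow> 0 \<in> subdiff ustar u"

definition spurious_stationary :: "real^'n \<Rightarrow> real^'n \<Rightarrow> bool" where
  "spurious_stationary ustar u \<longleftrightarrow> stationary ustar u \<and> u \<noteq> ustar \<and> u \<noteq> - ustar"

end

theory Submission
  imports Defs
begin

definition gg :: "real \<Rightarrow> real \<Rightarrow> real" where
  "gg a b = (if a = 0 then \<bar>b\<bar> else sgn a * b)"

lemma term_lim:
  fixes a b c :: real
  shows "((\<lambda>t. (\<bar>a + t*b + t^2*c\<bar> - \<bar>a\<bar>)/t) \<longlongrightarrow> gg a b) (at_right 0)"
proof -
  have pos: "\<forall>\<^sub>F t in at_right (0::real). t > 0"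
    by (simp add: eventually_at_right_less)
  have lim1: "((\<lambda>t. b + t*c) \<longlongrightarrow> b) (at_right (0::real))"
    by (auto intro!: tendsto_eq_intros)
  have lim2: "((\<lambda>t. a + t*b + t^2*c) \<longlongrightarrow> a) (at_right (0::real))"
    by (auto intro!: tendsto_eq_intros)
  show ?thesis
  proof (cases "a = 0")
    case True
    have "((\<lambda>t. \<bar>b + t*c\<bar>) \<longlongrightarrow> \<bar>b\<bar>) (at_right (0::real))"
      using lim1 by (rule tendsto_rabs)
    moreover have "\<forall>\<^sub>F t in at_right (0::real). \<bar>b + t*c\<bar> = (\<bar>a + t*b + t^2*c\<bar> - \<bar>a\<bar>)/t"
      using pos
    proof (rule eventually_mono)
      fix t :: real assume "t > 0"
      have "a + t*b + t^2*c = t*(b+t*c)" using True by (simp add: power2_eq_square algebra_simps)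
      then have "\<bar>a + t*b + t^2*c\<bar> = t * \<bar>b + t*c\<bar>" using \<open>t>0\<close>
        by (simp add: abs_mult)
      then show "\<bar>b + t*c\<bar> = (\<bar>a + t*b + t^2*c\<bar> - \<bar>a\<bar>)/t" using True \<open>t>0\<close> by simp
    qed
    ultimately show ?thesis using True by (simp add: gg_def tendsto_cong)
  next
    case False
    have ev: "\<forall>\<^sub>F t in at_right (0::real). sgn a * (a + t*b + t^2*c) > 0"
    proof -
      have "((\<lambda>t. sgn a * (a + t*b + t^2*c)) \<longlongrightarrow> sgn a * a) (at_right (0::real))"
        using lim2 by (rule tendsto_mult_left)
      moreover have "sgn a * a > 0" using False by (simp add: sgn_if)
      ultimately show ?thesis by (rule order_tendstoD)
    qed
    have "((\<lambda>t. sgn a * (b + t*c)) \<longlongrightarrow> sgn a * b) (at_right (0::real))"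
      using lim1 by (rule tendsto_mult_left)
    moreover have "\<forall>\<^sub>F t in at_right (0::real). sgn a * (b + t*c) = (\<bar>a + t*b + t^2*c\<bar> - \<bar>a\<bar>)/t"
      using eventually_conj[OF ev pos]
    proof (rule eventually_mono)
      fix t :: real assume h: "sgn a * (a + t*b + t^2*c) > 0 \<and> t > 0"
      have "\<bar>a + t*b + t^2*c\<bar> = sgn a * (a + t*b + t^2*c)"
        using h False by (cases "a > 0") (auto simp: sgn_if)
      moreover have "\<bar>a\<bar> = sgn a * a" by (simp add: abs_sgn_eq sgn_if)
      ultimately have "\<bar>a + t*b + t^2*c\<bar> - \<bar>a\<bar> = t * (sgn a * (b + t*c))"
        by (simp add: power2_eq_square algebra_simps)
      then show "sgn a * (b + t*c) = (\<bar>a + t*b + t^2*c\<bar> - \<bar>a\<bar>)/t" using h by simp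
    qed
    ultimately show ?thesis using False by (simp add: gg_def tendsto_cong)
  qed
qed

lemma dirderiv_formula:
  fixes s x w :: "real^'n"
  shows "dirderiv (obj s) x w = (1/2) * (\<Sum>i\<in>UNIV. \<Sum>j\<in>UNIV.
            gg (x$i*x$j - s$i* s$j) (x$i*w$j + w$i*x$j))"
proof -
  have eq: "(\<lambda>t. (obj s (x + t *\<^sub>R w) - obj s x) / t) =
     (\<lambda>t. (1/2) * (\<Sum>i\<in>UNIV. \<Sum>j\<in>UNIV.
        (\<bar>(x$i*x$j - s$i* s$j) + t*(x$i*w$j + w$i*x$j) + t^2*(w$i*w$j)\<bar> - \<bar>x$i*x$j - s$i* s$j\<bar>)/t))"
  proof
    fix t :: real
    have h: "\<And>i j. (x + t *\<^sub>R w)$i * (x + t *\<^sub>R w)$j - s$i * s$j =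
          (x$i*x$j - s$i * s$j) + t*(x$i*w$j + w$i*x$j) + t^2*(w$i*w$j)"
      by (simp add: power2_eq_square algebra_simps)
    have "obj s (x + t *\<^sub>R w) - obj s x = (1/2) * ((\<Sum>i\<in>UNIV. \<Sum>j\<in>UNIV.
        \<bar>(x$i*x$j - s$i * s$j) + t*(x$i*w$j + w$i*x$j) + t^2*(w$i*w$j)\<bar>) - 
        (\<Sum>i\<in>UNIV. \<Sum>j\<in>UNIV. \<bar>x$i*x$j - s$i * s$j\<bar>))"
      unfolding obj_def h by (simp add: right_diff_distrib)
    also have "\<dots> = (1/2) * (\<Sum>i\<in>UNIV. \<Sum>j\<in>UNIV.
        (\<bar>(x$i*x$j - s$i * s$j) + t*(x$i*w$j + w$i*x$j) + t^2*(w$i*w$j)\<bar> - \<bar>x$i*x$j - s$i * s$j\<bar>))"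
      by (simp add: sum_subtractf)
    finally show "(obj s (x + t *\<^sub>R w) - obj s x) / t = (1/2) * (\<Sum>i\<in>UNIV. \<Sum>j\<in>UNIV.
        (\<bar>(x$i*x$j - s$i * s$j) + t*(x$i*w$j + w$i*x$j) + t^2*(w$i*w$j)\<bar> - \<bar>x$i*x$j - s$i * s$j\<bar>)/t)"
      by (simp add: sum_divide_distrib mult.commute)
  qed
  have "((\<lambda>t. (1/2) * (\<Sum>i\<in>UNIV. \<Sum>j\<in>UNIV.
        (\<bar>(x$i*x$j - s$i* s$j) + t*(x$i*w$j + w$i*x$j) + t^2*(w$i*w$j)\<bar> - \<bar>x$i*x$j - s$i* s$j\<bar>)/t))
     \<longlongrightarrow> (1/2) * (\<Sum>i\<in>UNIV. \<Sum>j\<in>UNIV.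
            gg (x$i*x$j - s$i* s$j) (x$i*w$j + w$i*x$j))) (at_right 0)"
    by (intro tendsto_mult_left tendsto_sum term_lim)
  then show ?thesis unfolding dirderiv_def eq by (intro tendsto_Lim) simp_all
qed

lemma sgn_self: "sgn (x::real) * x = \<bar>x\<bar>"
  by (simp add: abs_if sgn_if)

lemma Sign_abs: "z \<in> Sign a \<Longrightarrow> \<bar>z\<bar> \<le> 1"
  by (auto simp: Sign_def sgn_if split: if_splits)

lemma Sign_nz: "z \<in> Sign a \<Longrightarrow> a \<noteq> 0 \<Longrightarrow> z = sgn a"
  by (auto simp: Sign_def)

lemma logterm:
  fixes R q z :: real
  assumes "R > 0" "q \<noteq> 0" "z \<in> Sign (R*q - q)"
  shows "z * ln R * (R*q) \<ge> 0" and "R \<noteq> 1 \<Longrightarrow> z * ln R * (R*q) > 0"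
proof -
  have main: "z * ln R * (R*q) > 0" if "R \<noteq> 1"
  proof (cases "R > 1")
    case True
    have "R*q - q = (R-1)*q" by (simp add: algebra_simps)
    moreover have "(R-1)*q \<noteq> 0" using True assms by simp
    ultimately have z: "z = sgn q" using assms Sign_nz[OF assms(3)] True
      by (simp add: sgn_mult)
    have "ln R > 0" using True by simp
    moreover have "sgn q * (R*q) > 0" using assms
      by (cases "q > 0") (auto simp: sgn_if mult_neg_neg mult_pos_neg)
    ultimately show ?thesis using z by (metis mult.assoc mult.commute mult_pos_pos)
  next
    case False
    then have R1: "R < 1" using that by simp
    have "R*q - q = (R-1)*q" by (simp add: algebra_simps)
    moreover have "(R-1)*q \<noteq> 0" using R1 assms by simp
    ultimately have z: "z = - sgn q" using assms Sign_nz[OF assms(3)] R1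
      by (simp add: sgn_mult)
    have "ln R < 0" using R1 assms by simp
    moreover have "sgn q * (R*q) > 0" using assms
      by (cases "q > 0") (auto simp: sgn_if mult_neg_neg mult_pos_neg)
    ultimately have "ln R * (sgn q * (R*q)) < 0" by (rule mult_neg_pos)
    moreover have "z * ln R * (R*q) = - (ln R * (sgn q * (R*q)))" by (simp add: z)
    ultimately show ?thesis by linarith
  qed
  then show "R \<noteq> 1 \<Longrightarrow> z * ln R * (R*q) > 0" .
  show "z * ln R * (R*q) \<ge> 0"
    using main by (cases "R = 1") auto
qed

lemma supp_lemma:
  fixes Z :: "real^'n^'n" and u s :: "real^'n"
  assumes signZ: "\<And>i j. Z$i$j \<in> Sign (u$i * u$j - s$i * s$j)"
    and row: "\<And>i. (\<Sum>j\<in>UNIV. Z$i$j * u$j) = 0"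
    and sk: "s$k = 0"
  shows "u$k = 0"
proof (rule ccontr)
  assume uk: "u$k \<noteq> 0"
  have t: "Z$k$j * (u$k * u$j) = \<bar>u$k * u$j\<bar>" for j
  proof (cases "u$j = 0")
    case False
    then have "Z$k$j = sgn (u$k * u$j)" using Sign_nz[OF signZ[of k j]] sk uk by simp
    then show ?thesis by (simp only: sgn_self)
  qed simp
  have "(\<Sum>j\<in>UNIV. \<bar>u$k * u$j\<bar>) = (\<Sum>j\<in>UNIV. Z$k$j * (u$k * u$j))"
    by (simp only: t)
  also have "\<dots> = u$k * (\<Sum>j\<in>UNIV. Z$k$j * u$j)"
    by (simp add: sum_distrib_left algebra_simps)
  also have "\<dots> = 0" using row by simp
  finally have "\<forall>j\<in>UNIV. \<bar>u$k * u$j\<bar> = 0"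
    by (subst sum_nonneg_eq_0_iff[symmetric]) auto
  then show False using uk by auto
qed

lemma log_lemma:
  fixes Z :: "real^'n^'n" and u s :: "real^'n"
  assumes symZ: "\<And>i j. Z$i$j = Z$j$i"
    and signZ: "\<And>i j. Z$i$j \<in> Sign (u$i * u$j - s$i * s$j)"
    and row: "\<And>i. (\<Sum>j\<in>UNIV. Z$i$j * u$j) = 0"
    and supp: "\<And>k. s$k = 0 \<Longrightarrow> u$k = 0"
    and sg: "\<And>k. s$k \<noteq> 0 \<Longrightarrow> u$k \<noteq> 0 \<and> sgn (u$k) = sgn (s$k)"
  shows "u = s"
proof -
  define r where "r k = u$k / s$k" for k
  define w where "w k = ln (r k)" for k
  have rpos: "r k > 0" if "s$k \<noteq> 0" for k
    using sg[OF that] unfolding r_def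
    by (cases "s$k > 0") (auto simp: sgn_if divide_pos_pos divide_neg_neg split: if_splits)
  have ur: "u$k = r k * s$k" if "s$k \<noteq> 0" for k
    using that unfolding r_def by simp
  have X0: "(\<Sum>i\<in>UNIV. \<Sum>j\<in>UNIV. Z$i$j * w i * (u$i * u$j)) = 0"
  proof -
    have "(\<Sum>j\<in>UNIV. Z$i$j * w i * (u$i * u$j)) = w i * u$i * (\<Sum>j\<in>UNIV. Z$i$j * u$j)" for i
      by (simp add: sum_distrib_left algebra_simps)
    then show ?thesis using row by simp
  qed
  have X1: "(\<Sum>i\<in>UNIV. \<Sum>j\<in>UNIV. Z$i$j * w j * (u$i * u$j)) = 0"
  proof -
    have "(\<Sum>i\<in>UNIV. \<Sum>j\<in>UNIV. Z$i$j * w j * (u$i * u$j))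
        = (\<Sum>j\<in>UNIV. \<Sum>i\<in>UNIV. Z$i$j * w j * (u$i * u$j))"
      by (rule sum.swap)
    also have "\<dots> = (\<Sum>j\<in>UNIV. \<Sum>i\<in>UNIV. Z$j$i * w j * (u$j * u$i))"
      by (simp add: symZ mult.commute)
    finally show ?thesis using X0 by simp
  qed
  define T where "T i j = Z$i$j * (w i + w j) * (u$i * u$j)" for i j
  have Tnn: "T i j \<ge> 0" for i j
  proof (cases "u$i = 0 \<or> u$j = 0")
    case False
    then have si: "s$i \<noteq> 0" and sj: "s$j \<noteq> 0" using supp by auto
    have R: "r i * r j > 0" using rpos[OF si] rpos[OF sj] by simp
    have e1: "w i + w j = ln (r i * r j)" unfolding w_def
      using rpos[OF si] rpos[OF sj] by (simp add: ln_mult)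
    have e2: "u$i * u$j = (r i * r j) * (s$i * s$j)" using ur[OF si] ur[OF sj] by simp
    have "Z$i$j \<in> Sign ((r i * r j) * (s$i * s$j) - s$i * s$j)"
      using signZ[of i j] e2 by simp
    from logterm(1)[OF R _ this] si sj show ?thesis unfolding T_def e1 e2 by simp
  qed (auto simp: T_def)
  have "(\<Sum>i\<in>UNIV. \<Sum>j\<in>UNIV. T i j) = 0"
    using X0 X1 unfolding T_def by (simp add: algebra_simps sum.distrib)
  then have "\<forall>i\<in>UNIV. (\<Sum>j\<in>UNIV. T i j) = 0"
    by (subst sum_nonneg_eq_0_iff[symmetric]) (auto intro: sum_nonneg Tnn)
  then have T0: "T i j = 0" for i j
    using sum_nonneg_eq_0_iff[of UNIV "T i"] Tnn by auto
  show ?thesis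
  unfolding vec_eq_iff
  proof (intro allI)
    fix k
    show "u$k = s$k"
    proof (cases "s$k = 0")
      case True then show ?thesis using supp by simp
    next
      case False
      have R: "r k * r k > 0" using rpos[OF False] by simp
      have e1: "w k + w k = ln (r k * r k)" unfolding w_def
        using rpos[OF False] by (simp add: ln_mult)
      have e2: "u$k * u$k = (r k * r k) * (s$k * s$k)" using ur[OF False] by simp
      have "Z$k$k \<in> Sign ((r k * r k) * (s$k * s$k) - s$k * s$k)"
        using signZ[of k k] e2 by simp
      note L = logterm(2)[OF R _ this]
      show ?thesis
      proof (rule ccontr)
        assume "u$k \<noteq> s$k"
        then have "r k \<noteq> 1" using ur[OF False] by auto
        then have "r k * r k \<noteq> 1" using rpos[OF False]
          by (auto simp: square_eq_1_iff)
        then have "T k k > 0" using L False unfolding T_def e1 e2 by simp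
        then show False using T0 by simp
      qed
    qed
  qed
qed

lemma sgn_abs_self: "sgn (x::real) * \<bar>x\<bar> = x"
  by (simp add: abs_if sgn_if)

lemma term_nonneg:
  fixes z p q :: real
  assumes "z \<in> Sign (p - q)" "p \<noteq> 0" "q \<noteq> 0"
  shows "z*p + sgn p * sgn q * \<bar>p\<bar> \<ge> 0"
proof (cases "sgn p = sgn q")
  case True
  have "\<bar>z\<bar> \<le> 1" using Sign_abs[OF assms(1)] .
  then have "\<bar>z * p\<bar> \<le> \<bar>p\<bar>" by (simp add: abs_mult mult_left_le_one_le)
  moreover have "sgn p * sgn q = 1" using True assms by (simp add: sgn_if)
  ultimately show ?thesis by simp
next
  case False
  then have "(p > 0 \<and> q < 0) \<or> (p < 0 \<and> q > 0)" using assms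
    by (auto simp: sgn_if split: if_splits)
  then have "p - q \<noteq> 0 \<and> sgn (p - q) = sgn p \<and> sgn p * sgn q = -1" by auto
  then have "z = sgn p" "sgn p * sgn q = -1" using Sign_nz[OF assms(1)] by auto
  then show ?thesis by (simp add: sgn_self)
qed

lemma struct_lemma:
  fixes Z :: "real^'n^'n" and u s :: "real^'n"
  assumes symZ: "\<And>i j. Z$i$j = Z$j$i"
    and signZ: "\<And>i j. Z$i$j \<in> Sign (u$i * u$j - s$i * s$j)"
    and row: "\<And>i. (\<Sum>j\<in>UNIV. Z$i$j * u$j) = 0"
    and nus: "u \<noteq> s" and nums: "u \<noteq> - s"
  shows "\<And>i j. u$i \<noteq> 0 \<Longrightarrow> Z$i$j * (u$i * u$j) =
      - ((sgn (u$i) * sgn (s$i)) * (sgn (u$j) * sgn (s$j)) * \<bar>u$i * u$j\<bar>)"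
proof -
  have supp: "u$k = 0" if "s$k = 0" for k using supp_lemma[OF signZ row that] .
  define K where "K = (\<Sum>j\<in>UNIV. sgn (s$j) * u$j)"
  define G where "G i j = Z$i$j * (u$i * u$j) + (sgn (u$i) * sgn (s$i)) * (sgn (u$j) * sgn (s$j)) * \<bar>u$i * u$j\<bar>" for i j
  have Gnn: "G i j \<ge> 0" if "u$i \<noteq> 0" for i j
  proof (cases "u$j = 0")
    case False
    have si: "s$i \<noteq> 0" and sj: "s$j \<noteq> 0" using supp that False by auto
    have "(sgn (u$i) * sgn (s$i)) * (sgn (u$j) * sgn (s$j)) = sgn (u$i * u$j) * sgn (s$i * s$j)"
      by (simp add: sgn_mult)
    then show ?thesis unfolding G_def
      using term_nonneg[OF signZ[of i j]] si sj that False by simp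
  qed (simp add: G_def)
  have rowK: "(\<Sum>j\<in>UNIV. G i j) = (sgn (u$i) * sgn (s$i)) * \<bar>u$i\<bar> * K" for i
  proof -
    have a: "(\<Sum>j\<in>UNIV. Z$i$j * (u$i * u$j)) = u$i * (\<Sum>j\<in>UNIV. Z$i$j * u$j)"
      by (simp add: sum_distrib_left algebra_simps)
    have b: "(sgn (u$i) * sgn (s$i)) * (sgn (u$j) * sgn (s$j)) * \<bar>u$i * u$j\<bar>
        = (sgn (u$i) * sgn (s$i)) * \<bar>u$i\<bar> * (sgn (s$j) * (sgn (u$j) * \<bar>u$j\<bar>))" for j
      by (simp add: abs_mult algebra_simps)
    show ?thesis unfolding G_def sum.distrib a b sgn_abs_self K_def
      by (simp add: row sum_distrib_left)
  qed
  have sigK: "(sgn (u$i) * sgn (s$i)) * K \<ge> 0" if "u$i \<noteq> 0" for i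
  proof -
    have "(sgn (u$i) * sgn (s$i)) * \<bar>u$i\<bar> * K \<ge> 0"
      unfolding rowK[symmetric] using Gnn[OF that] by (simp add: sum_nonneg)
    then have "\<bar>u$i\<bar> * ((sgn (u$i) * sgn (s$i)) * K) \<ge> 0" by (simp add: algebra_simps)
    then show ?thesis using that by (simp add: zero_le_mult_iff)
  qed
  have K0: "K = 0"
  proof (rule ccontr)
    assume K: "K \<noteq> 0"
    have full: "u$k \<noteq> 0" if "s$k \<noteq> 0" for k
    proof
      assume uk: "u$k = 0"
      have "(\<Sum>i\<in>UNIV. Z$k$i * s$k * u$i) = s$k * (\<Sum>i\<in>UNIV. Z$k$i * u$i)"
        by (simp add: sum_distrib_left algebra_simps)
      also have "\<dots> = 0" using row by simp
      also have "(\<Sum>i\<in>UNIV. Z$k$i * s$k * u$i) = (\<Sum>i\<in>UNIV. - \<bar>s$k\<bar> * (sgn (s$i) * u$i))"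
      proof (rule sum.cong)
        fix i
        show "Z$k$i * s$k * u$i = - \<bar>s$k\<bar> * (sgn (s$i) * u$i)"
        proof (cases "u$i = 0")
          case False
          then have si: "s$i \<noteq> 0" using supp by auto
          have "Z$k$i = sgn (u$k * u$i - s$k * s$i)" using Sign_nz[OF signZ[of k i]] uk that si by simp
          then have "Z$k$i = - (sgn (s$k) * sgn (s$i))" using uk by (simp add: sgn_mult)
          then show ?thesis by (simp add: sgn_self[of "s$k", symmetric] algebra_simps)
        qed simp
      qed simp
      finally have "- \<bar>s$k\<bar> * K = 0" unfolding K_def by (simp add: sum_distrib_left)
      then show False using K that by simp
    qed
    have sig: "sgn (u$k) * sgn (s$k) = 1 \<or> sgn (u$k) * sgn (s$k) = -1" if "s$k \<noteq> 0" for k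
      using full[OF that] that by (auto simp: sgn_if)
    show False
    proof (cases "K > 0")
      case True
      have "u = s"
      proof (rule log_lemma[OF symZ signZ row supp])
        fix k assume sk: "s$k \<noteq> 0"
        have "sgn (u$k) * sgn (s$k) = 1" using sig[OF sk] sigK[OF full[OF sk]] True
          by (auto simp: mult_le_0_iff)
        then show "u$k \<noteq> 0 \<and> sgn (u$k) = sgn (s$k)" using full[OF sk] sk
          by (auto simp: sgn_if split: if_splits)
      qed
      then show False using nus by simp
    next
      case False
      then have Kn: "K < 0" using K by simp
      have "- u = s"
      proof (rule log_lemma[OF symZ])
        show "Z$i$j \<in> Sign ((-u)$i * (-u)$j - s$i * s$j)" for i j using signZ[of i j] by simp
        show "(\<Sum>j\<in>UNIV. Z$i$j * (-u)$j) = 0" for i using row[of i] by (simp add: sum_negf)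
        show "(-u)$k = 0" if "s$k = 0" for k using supp[OF that] by simp
        fix k assume sk: "s$k \<noteq> 0"
        have "sgn (u$k) * sgn (s$k) = -1" using sig[OF sk] sigK[OF full[OF sk]] Kn
          by (auto simp: mult_le_0_iff)
        then show "(-u)$k \<noteq> 0 \<and> sgn ((-u)$k) = sgn (s$k)" using full[OF sk] sk
          by (auto simp: sgn_if split: if_splits)
      qed
      then show False using nums by auto
    qed
  qed
  fix i j assume ui: "u$i \<noteq> 0"
  have "(\<Sum>j\<in>UNIV. G i j) = 0" using rowK K0 by simp
  then have "G i j = 0" using sum_nonneg_eq_0_iff[of UNIV "G i"] Gnn[OF ui] by auto
  then show "Z$i$j * (u$i * u$j) =
      - ((sgn (u$i) * sgn (s$i)) * (sgn (u$j) * sgn (s$j)) * \<bar>u$i * u$j\<bar>)"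
    unfolding G_def by linarith
qed


lemma gg_zero: "gg a 0 = 0"
  by (simp add: gg_def)

lemma negabs: "(z::real) = -1 \<Longrightarrow> z * (2*x) = \<bar>2*x\<bar> \<Longrightarrow> x \<le> 0"
  by (simp add: abs_if split: if_splits)

lemma bform_lemma:
  fixes ui uj xi xj :: real
  shows "ui * (sgn uj * xj) + sgn ui * xi * uj = sgn ui * sgn uj * (\<bar>ui\<bar> * xj + \<bar>uj\<bar> * xi)"
  by (cases "ui > 0"; cases "uj > 0"; cases "ui = 0"; cases "uj = 0") (auto simp: sgn_if algebra_simps)

theorem proposition2:
  fixes ustar u :: "real^'n"
  assumes "ustar \<noteq> 0"
    and "u \<noteq> 0"
    and "spurious_stationary ustar u"
  shows "(\<forall>j. ustar$j \<noteq> 0 \<longrightarrow> \<bar>u$j\<bar> \<le> \<bar>ustar$j\<bar>)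
       \<and> {w. dirderiv (obj ustar) u w = 0} =
         {w. \<forall>j. (ustar$j \<noteq> 0 \<and> \<bar>u$j\<bar> = \<bar>ustar$j\<bar> \<longrightarrow> w$j \<in> {sgn (u$j) * x | x. x \<le> 0})
               \<and> (ustar$j = 0 \<longrightarrow> w$j = 0)}
       \<and> {w. dirderiv (obj ustar) 0 w = 0} = UNIV"
proof -
  from assms(3) obtain Z :: "real^'n^'n" where
    tZ: "transpose Z = Z" and sZ: "\<forall>i j. Z$i$j \<in> Sign (u$i * u$j - ustar$i * ustar$j)"
    and Zu: "Z *v u = 0" and nus: "u \<noteq> ustar" and nums: "u \<noteq> - ustar"
    unfolding spurious_stationary_def stationary_def subdiff_def by auto
  have symZ: "Z$i$j = Z$j$i" for i j
    using arg_cong[OF tZ, of "\<lambda>A. A$i$j"] by (simp add: transpose_def)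
  have signZ: "Z$i$j \<in> Sign (u$i * u$j - ustar$i * ustar$j)" for i j using sZ by simp
  have row: "(\<Sum>j\<in>UNIV. Z$i$j * u$j) = 0" for i
    using arg_cong[OF Zu, of "\<lambda>v. v$i"] by (simp add: matrix_vector_mult_def)
  have supp: "u$k = 0" if "ustar$k = 0" for k using supp_lemma[OF signZ row that] .
  note ST = struct_lemma[OF symZ signZ row nus nums]
  have ZE: "Z$i$j = - sgn (u$i * u$j)" if "u$i * u$j = ustar$i * ustar$j" "u$i * u$j \<noteq> 0" for i j
  proof -
    have ui: "u$i \<noteq> 0" using that by auto
    have "(sgn (u$i) * sgn (ustar$i)) * (sgn (u$j) * sgn (ustar$j)) = sgn (u$i * u$j) * sgn (ustar$i * ustar$j)"
      by (simp add: sgn_mult)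
    also have "\<dots> = 1" using that(1) that(2) by (simp add: sgn_if)
    finally have "Z$i$j * (u$i * u$j) = - \<bar>u$i * u$j\<bar>" using ST[OF ui, of j] by simp
    then have "Z$i$j * (u$i * u$j) = (- sgn (u$i * u$j)) * (u$i * u$j)"
      by (simp add: sgn_self)
    then show ?thesis using mult_right_cancel[OF that(2)] by blast
  qed
  have FB: "\<bar>u$k\<bar> \<le> \<bar>ustar$k\<bar>" for k
  proof (cases "u$k = 0")
    case False
    have "(sgn (u$k) * sgn (ustar$k)) * (sgn (u$k) * sgn (ustar$k)) = 1"
      using False supp by (auto simp: sgn_if)
    then have "Z$k$k * (u$k * u$k) = - (u$k * u$k)" using ST[OF False, of k] by simp
    then have "(Z$k$k + 1) * (u$k * u$k) = 0" by (simp add: distrib_right)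
    then have "Z$k$k + 1 = 0" using False by simp
    then have Zkk: "Z$k$k = -1" by simp
    have "u$k * u$k - ustar$k * ustar$k \<le> 0"
    proof (rule ccontr)
      assume "\<not> ?thesis"
      then have "Z$k$k = 1" using Sign_nz[OF signZ[of k k]] by simp
      then show False using Zkk by simp
    qed
    then show ?thesis by (simp add: abs_le_square_iff power2_eq_square)
  qed simp
  define a where "a i j = u$i * u$j - ustar$i * ustar$j" for i j
  define b where "b w i j = u$i * w$j + w$i * u$j" for w :: "real^'n" and i j
  define H where "H w i j = gg (a i j) (b w i j) - Z$i$j * b w i j" for w i j
  have Hnn: "H w i j \<ge> 0" for w i j
  proof (cases "a i j = 0")
    case True
    have "\<bar>Z$i$j * b w i j\<bar> \<le> \<bar>b w i j\<bar>"
      using Sign_abs[OF signZ[of i j]] by (simp add: abs_mult mult_left_le_one_le)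
    then show ?thesis using True by (simp add: H_def gg_def)
  next
    case False
    then show ?thesis using Sign_nz[OF signZ[of i j]] by (simp add: H_def gg_def a_def)
  qed
  have Hiff: "H w i j = 0 \<longleftrightarrow> (a i j = 0 \<longrightarrow> Z$i$j * b w i j = \<bar>b w i j\<bar>)" for w i j
    using Sign_nz[OF signZ[of i j]] by (auto simp: H_def gg_def a_def)
  have ZB: "(\<Sum>i\<in>UNIV. \<Sum>j\<in>UNIV. Z$i$j * b w i j) = 0" for w
  proof -
    have e1: "(\<Sum>i\<in>UNIV. \<Sum>j\<in>UNIV. Z$i$j * (w$i * u$j)) = 0"
    proof -
      have "(\<Sum>j\<in>UNIV. Z$i$j * (w$i * u$j)) = w$i * (\<Sum>j\<in>UNIV. Z$i$j * u$j)" for i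
        by (simp add: sum_distrib_left algebra_simps)
      then show ?thesis using row by simp
    qed
    have e2: "(\<Sum>i\<in>UNIV. \<Sum>j\<in>UNIV. Z$i$j * (u$i * w$j)) = 0"
    proof -
      have "(\<Sum>i\<in>UNIV. \<Sum>j\<in>UNIV. Z$i$j * (u$i * w$j)) = (\<Sum>j\<in>UNIV. \<Sum>i\<in>UNIV. Z$i$j * (u$i * w$j))"
        by (rule sum.swap)
      also have "\<dots> = (\<Sum>j\<in>UNIV. \<Sum>i\<in>UNIV. Z$j$i * (w$j * u$i))"
        by (simp add: symZ mult.commute)
      finally show ?thesis using e1 by simp
    qed
    show ?thesis unfolding b_def using e1 e2 by (simp add: distrib_left sum.distrib)
  qed
  have D: "dirderiv (obj ustar) u w = (1/2) * (\<Sum>i\<in>UNIV. \<Sum>j\<in>UNIV. H w i j)" for w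
  proof -
    have "dirderiv (obj ustar) u w = (1/2) * (\<Sum>i\<in>UNIV. \<Sum>j\<in>UNIV. gg (a i j) (b w i j))"
      unfolding dirderiv_formula a_def b_def ..
    also have "\<dots> = (1/2) * (\<Sum>i\<in>UNIV. \<Sum>j\<in>UNIV. H w i j)"
      using ZB[of w] unfolding H_def by (simp add: sum_subtractf)
    finally show ?thesis .
  qed
  have D0: "dirderiv (obj ustar) u w = 0 \<longleftrightarrow> (\<forall>i j. a i j = 0 \<longrightarrow> Z$i$j * b w i j = \<bar>b w i j\<bar>)" for w
  proof -
    have "dirderiv (obj ustar) u w = 0 \<longleftrightarrow> (\<Sum>i\<in>UNIV. \<Sum>j\<in>UNIV. H w i j) = 0" using D[of w] by linarith
    also have "\<dots> \<longleftrightarrow> (\<forall>i\<in>UNIV. (\<Sum>j\<in>UNIV. H w i j) = 0)"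
      by (rule sum_nonneg_eq_0_iff) (auto intro: sum_nonneg Hnn)
    also have "\<dots> \<longleftrightarrow> (\<forall>i j. H w i j = 0)"
      using sum_nonneg_eq_0_iff[of UNIV "H w _"] Hnn by auto
    finally show ?thesis using Hiff by simp
  qed
  have uex: "\<exists>k. u$k \<noteq> 0" using assms(2) by (simp add: vec_eq_iff)
  have main: "(\<forall>i j. a i j = 0 \<longrightarrow> Z$i$j * b w i j = \<bar>b w i j\<bar>) \<longleftrightarrow>
      (\<forall>j. (ustar$j \<noteq> 0 \<and> \<bar>u$j\<bar> = \<bar>ustar$j\<bar> \<longrightarrow> w$j \<in> {sgn (u$j) * x | x. x \<le> 0})
               \<and> (ustar$j = 0 \<longrightarrow> w$j = 0))" for w
  proof
    assume Q: "\<forall>i j. a i j = 0 \<longrightarrow> Z$i$j * b w i j = \<bar>b w i j\<bar>"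
    show "\<forall>j. (ustar$j \<noteq> 0 \<and> \<bar>u$j\<bar> = \<bar>ustar$j\<bar> \<longrightarrow> w$j \<in> {sgn (u$j) * x | x. x \<le> 0})
               \<and> (ustar$j = 0 \<longrightarrow> w$j = 0)"
    proof (intro allI conjI impI)
      fix j assume h: "ustar$j \<noteq> 0 \<and> \<bar>u$j\<bar> = \<bar>ustar$j\<bar>"
      have uj: "u$j \<noteq> 0" using h by auto
      have sq: "u$j * u$j = ustar$j * ustar$j" using h by (metis abs_mult_self_eq)
      have "sgn (u$j * u$j) = 1" using uj by (simp add: sgn_mult sgn_if)
      then have "Z$j$j = -1" using ZE[OF sq] uj by simp
      moreover have "a j j = 0" using sq by (simp add: a_def)
      ultimately have Zbj: "Z$j$j * b w j j = \<bar>b w j j\<bar>" using Q by blast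
      have B: "b w j j = 2 * (u$j * w$j)" by (simp add: b_def)
      have "Z$j$j * (2 * (u$j * w$j)) = \<bar>2 * (u$j * w$j)\<bar>" using Zbj unfolding B by blast
      then have uw: "u$j * w$j \<le> 0" by (rule negabs[OF \<open>Z$j$j = -1\<close>])
      have "sgn (u$j) * w$j \<le> 0" using uw uj by (auto simp: sgn_if mult_le_0_iff)
      moreover have "w$j = sgn (u$j) * (sgn (u$j) * w$j)"
      proof -
        have "sgn (u$j) * sgn (u$j) = 1" using uj by (simp add: sgn_if)
        then show ?thesis by (metis mult.assoc mult_1)
      qed
      ultimately show "w$j \<in> {sgn (u$j) * x | x. x \<le> 0}" by blast
    next
      fix j assume sj: "ustar$j = 0"
      have uj: "u$j = 0" using supp[OF sj] .
      show "w$j = 0"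
      proof (rule ccontr)
        assume wj: "w$j \<noteq> 0"
        have t: "Z$j$i * (w$j * u$i) = \<bar>w$j * u$i\<bar>" for i
        proof -
          have A: "a j i = 0" using uj sj by (simp add: a_def)
          have B: "b w j i = w$j * u$i" using uj by (simp add: b_def)
          show ?thesis using Q A unfolding B[symmetric] by blast
        qed
        have "(\<Sum>i\<in>UNIV. \<bar>w$j * u$i\<bar>) = (\<Sum>i\<in>UNIV. Z$j$i * (w$j * u$i))" by (simp only: t)
        also have "\<dots> = w$j * (\<Sum>i\<in>UNIV. Z$j$i * u$i)" by (simp add: sum_distrib_left algebra_simps)
        also have "\<dots> = 0" using row by simp
        finally have "\<forall>i\<in>UNIV. \<bar>w$j * u$i\<bar> = 0"
          by (subst sum_nonneg_eq_0_iff[symmetric]) auto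
        then show False using wj uex by auto
      qed
    qed
  next
    assume P: "\<forall>j. (ustar$j \<noteq> 0 \<and> \<bar>u$j\<bar> = \<bar>ustar$j\<bar> \<longrightarrow> w$j \<in> {sgn (u$j) * x | x. x \<le> 0})
               \<and> (ustar$j = 0 \<longrightarrow> w$j = 0)"
    show "\<forall>i j. a i j = 0 \<longrightarrow> Z$i$j * b w i j = \<bar>b w i j\<bar>"
    proof (intro allI impI)
      fix i j assume aij: "a i j = 0"
      show "Z$i$j * b w i j = \<bar>b w i j\<bar>"
      proof (cases "ustar$i = 0 \<or> ustar$j = 0")
        case True
        then have "b w i j = 0" using P supp by (auto simp: b_def)
        then show ?thesis by simp
      next
        case False
        then have si: "ustar$i \<noteq> 0" and sj: "ustar$j \<noteq> 0" by auto
        have pq: "u$i * u$j = ustar$i * ustar$j" using aij by (simp add: a_def)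
        then have pnz: "u$i * u$j \<noteq> 0" using si sj by simp
        then have ui: "u$i \<noteq> 0" and uj: "u$j \<noteq> 0" by auto
        have ab: "\<bar>u$i\<bar> * \<bar>u$j\<bar> = \<bar>ustar$i\<bar> * \<bar>ustar$j\<bar>" using pq by (metis abs_mult)
        have Bi: "\<bar>u$i\<bar> \<le> \<bar>ustar$i\<bar>" and Bj: "\<bar>u$j\<bar> \<le> \<bar>ustar$j\<bar>" using FB by auto
        have ei: "\<bar>u$i\<bar> = \<bar>ustar$i\<bar>"
        proof (rule ccontr)
          assume "\<bar>u$i\<bar> \<noteq> \<bar>ustar$i\<bar>"
          then have "\<bar>u$i\<bar> < \<bar>ustar$i\<bar>" using Bi by simp
          then have "\<bar>u$i\<bar> * \<bar>u$j\<bar> < \<bar>ustar$i\<bar> * \<bar>u$j\<bar>" using uj by simp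
          also have "\<dots> \<le> \<bar>ustar$i\<bar> * \<bar>ustar$j\<bar>" using Bj by (simp add: mult_left_mono)
          finally show False using ab by simp
        qed
        have ej: "\<bar>u$j\<bar> = \<bar>ustar$j\<bar>"
        proof (rule ccontr)
          assume "\<bar>u$j\<bar> \<noteq> \<bar>ustar$j\<bar>"
          then have "\<bar>u$j\<bar> < \<bar>ustar$j\<bar>" using Bj by simp
          then have "\<bar>u$i\<bar> * \<bar>u$j\<bar> < \<bar>u$i\<bar> * \<bar>ustar$j\<bar>" using ui by simp
          also have "\<dots> \<le> \<bar>ustar$i\<bar> * \<bar>ustar$j\<bar>" using Bi by (simp add: mult_right_mono)
          finally show False using ab by simp
        qed
        obtain xi where xi: "w$i = sgn (u$i) * xi" "xi \<le> 0" using P si ei by blast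
        obtain xj where xj: "w$j = sgn (u$j) * xj" "xj \<le> 0" using P sj ej by blast
        have Zij: "Z$i$j = - (sgn (u$i) * sgn (u$j))" using ZE[OF pq pnz] by (simp add: sgn_mult)
        have bform: "b w i j = sgn (u$i) * sgn (u$j) * (\<bar>u$i\<bar> * xj + \<bar>u$j\<bar> * xi)"
          unfolding b_def xi xj by (rule bform_lemma)
        have nonpos: "\<bar>u$i\<bar> * xj + \<bar>u$j\<bar> * xi \<le> 0"
          using xi(2) xj(2) by (simp add: add_nonpos_nonpos mult_nonneg_nonpos)
        have ss: "(sgn (u$i) * sgn (u$j)) * (sgn (u$i) * sgn (u$j)) = 1" using ui uj by (simp add: sgn_if)
        have "\<bar>b w i j\<bar> = - (\<bar>u$i\<bar> * xj + \<bar>u$j\<bar> * xi)"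
          using nonpos ui uj unfolding bform by (simp add: abs_mult sgn_if)
        moreover have "Z$i$j * b w i j = - (\<bar>u$i\<bar> * xj + \<bar>u$j\<bar> * xi)"
          unfolding Zij bform using ss by (simp add: algebra_simps)
        ultimately show ?thesis by simp
      qed
    qed
  qed
  have zero: "dirderiv (obj ustar) 0 w = 0" for w
    unfolding dirderiv_formula by (simp add: gg_zero)
  show ?thesis
    using FB D0 main zero by auto
qed

end
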